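(* Let $\sigma=\begin{pmatrix}\frac13&0\\0&\frac23\end{pmatrix}$ and $D=\sigma\otimes\frac{I_3}{3}\in M_6$. There exists an extreme point of the convex set $\mathcal{CP}(M_6,M_6;D,D)$ with Choi rank $8$.
   Context: $M_n$ denotes the complex $n\times n$ matrices. For positive semidefinite $A\in M_{d_1}$, $B\in M_{d_2}$, $\mathcal{CP}(M_{d_1},M_{d_2};A,B)$ is the convex set of completely positive maps $\Phi:M_{d_1}\to M_{d_2}$ with $\Phi(I_{d_1})=B$ and $\Phi^*(I_{d_2})=A$ ($\Phi^*$ the Hilbert–Schmidt adjoint); equivalently $\Phi(X)=\sum_iK_iXK_i^\dagger$ with $\sum_iK_i^\dagger K_i=A$, $\sum_iK_iK_i^\dagger=B$. An extreme point of a convex set $\mathcal{K}$ is an element not expressible as $t\Phi_1+(1-t)\Phi_2$ with $t\in(0,1)$ and distinct $\Phi_1,\Phi_2\in\mathcal{K}$. The Choi rank of $\Phi$ is the rank of $\sum_{r,s}E_{rs}\otimes\Phi(E_{rs})$. *)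

theory Defs
  imports "Jordan_Normal_Form.Schur_Decomposition" "Jordan_Normal_Form.DL_Rank"
begin

text \<open>Complex matrices of M_n are elements of carrier_mat n n :: complex mat.
  Linear maps M_d1 -> M_d2 are represented as functions on complex mat, considered
  only on carrier_mat d1 d1.\<close>

definition kron_mat :: "complex mat \<Rightarrow> complex mat \<Rightarrow> complex mat" where
  "kron_mat A B = mat (dim_row A * dim_row B) (dim_col A * dim_col B)
     (\<lambda>(i, j). A $$ (i div dim_row B, j div dim_col B) * B $$ (i mod dim_row B, j mod dim_col B))"

definition mat_unit :: "nat \<Rightarrow> nat \<Rightarrow> nat \<Rightarrow> complex mat" where
  "mat_unit n r s = mat n n (\<lambda>(i, j). if i = r \<and> j = s then 1 else 0)"

definition sum_mats :: "nat \<Rightarrow> nat \<Rightarrow> complex mat list \<Rightarrow> complex mat" where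
  "sum_mats n m xs = foldr (+) xs (0\<^sub>m n m)"

definition kraus_map :: "nat \<Rightarrow> complex mat list \<Rightarrow> complex mat \<Rightarrow> complex mat" where
  "kraus_map d2 Ks X = sum_mats d2 d2 (map (\<lambda>K. K * X * mat_adjoint K) Ks)"

text \<open>CP(M_d1, M_d2; A, B): completely positive maps with Phi(I) = B and Phi^*(I) = A,
  via the Kraus representation given in the paper.\<close>
definition CP_set :: "nat \<Rightarrow> nat \<Rightarrow> complex mat \<Rightarrow> complex mat \<Rightarrow> (complex mat \<Rightarrow> complex mat) set" where
  "CP_set d1 d2 A B = {\<Phi>. \<exists>Ks. (\<forall>K\<in>set Ks. K \<in> carrier_mat d2 d1) \<and>
        (\<forall>X\<in>carrier_mat d1 d1. \<Phi> X = kraus_map d2 Ks X) \<and>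
        sum_mats d1 d1 (map (\<lambda>K. mat_adjoint K * K) Ks) = A \<and>
        sum_mats d2 d2 (map (\<lambda>K. K * mat_adjoint K) Ks) = B}"

text \<open>Extreme point of a set of maps M_d1 -> M_d2 (maps identified when they agree on M_d1).\<close>
definition extreme_map :: "nat \<Rightarrow> (complex mat \<Rightarrow> complex mat) set \<Rightarrow> (complex mat \<Rightarrow> complex mat) \<Rightarrow> bool" where
  "extreme_map d1 S \<Phi> \<longleftrightarrow> \<Phi> \<in> S \<and>
     \<not> (\<exists>t::real. \<exists>\<Phi>1\<in>S. \<exists>\<Phi>2\<in>S. 0 < t \<and> t < 1 \<and>
          (\<exists>X\<in>carrier_mat d1 d1. \<Phi>1 X \<noteq> \<Phi>2 X) \<and>
          (\<forall>X\<in>carrier_mat d1 d1. \<Phi> X = complex_of_real t \<cdot>\<^sub>m \<Phi>1 X + complex_of_real (1 - t) \<cdot>\<^sub>m \<Phi>2 X))"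

definition choi_mat :: "nat \<Rightarrow> nat \<Rightarrow> (complex mat \<Rightarrow> complex mat) \<Rightarrow> complex mat" where
  "choi_mat d1 d2 \<Phi> = sum_mats (d1*d2) (d1*d2) (map (\<lambda>(r, s). kron_mat (mat_unit d1 r s) (\<Phi> (mat_unit d1 r s)))
       (List.product [0..<d1] [0..<d1]))"

definition choi_rank :: "nat \<Rightarrow> nat \<Rightarrow> (complex mat \<Rightarrow> complex mat) \<Rightarrow> nat" where
  "choi_rank d1 d2 \<Phi> = vec_space.rank (d1 * d2) (choi_mat d1 d2 \<Phi>)"

definition sigma_mat :: "complex mat" where
  "sigma_mat = mat 2 2 (\<lambda>(i, j). if i = 0 \<and> j = 0 then 1/3 else if i = 1 \<and> j = 1 then 2/3 else 0)"

definition D_mat :: "complex mat" where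
  "D_mat = kron_mat sigma_mat ((1/3) \<cdot>\<^sub>m 1\<^sub>m 3)"

end

theory Submission
  imports Defs
begin


lemma sum_mats_dim[simp]: "dim_row (sum_mats n m xs) = n" "dim_col (sum_mats n m xs) = m"
  by (induction xs) (simp_all add: sum_mats_def)

lemma foldr_dim[simp]: "dim_row (foldr (+) (xs::complex mat list) (0\<^sub>m n m)) = n" "dim_col (foldr (+) (xs::complex mat list) (0\<^sub>m n m)) = (m::nat)"
  using sum_mats_dim[of n m xs] by (simp_all add: sum_mats_def)

lemma sum_mats_index: "i < n \<Longrightarrow> j < m \<Longrightarrow> sum_mats n m xs $$ (i,j) = sum_list (map (\<lambda>x. x $$ (i,j)) xs)"
  by (induction xs) (simp_all add: sum_mats_def)

lemma adj_dim[simp]: "dim_row (mat_adjoint A) = dim_col A" "dim_col (mat_adjoint A) = dim_row A"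
  by (simp_all add: mat_adjoint_def mat_of_rows_def)

lemma adj_index[simp]: "i < dim_col A \<Longrightarrow> j < dim_row A \<Longrightarrow> mat_adjoint A $$ (i,j) = cnj (A $$ (j,i))"
  by (simp add: mat_adjoint_def mat_of_rows_def)

definition GL :: "complex mat list \<Rightarrow> nat \<Rightarrow> nat \<Rightarrow> nat \<Rightarrow> nat \<Rightarrow> complex" where
  "GL L r c r' c' = sum_list (map (\<lambda>A. A $$ (r,c) * cnj (A $$ (r',c'))) L)"

lemma GL_Nil[simp]: "GL [] r c r' c' = 0" by (simp add: GL_def)
lemma GL_Cons[simp]: "GL (A # L) r c r' c' = A $$ (r,c) * cnj (A $$ (r',c')) + GL L r c r' c'"
  by (simp add: GL_def)

lemma kraus_term_index:
  assumes K: "K \<in> carrier_mat n n" and X: "X \<in> carrier_mat n n" and ij: "i < n" "j < n"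
  shows "(K * X * mat_adjoint K) $$ (i,j) = (\<Sum>k<n. \<Sum>l<n. X $$ (k,l) * (K $$ (i,k) * cnj (K $$ (j,l))))"
proof -
  have "(K * X * mat_adjoint K) $$ (i,j) = (\<Sum>l<n. (\<Sum>k<n. K $$ (i,k) * X $$ (k,l)) * cnj (K $$ (j,l)))"
    using K X ij by (simp add: scalar_prod_def atLeast0LessThan)
  also have "\<dots> = (\<Sum>l<n. \<Sum>k<n. X $$ (k,l) * (K $$ (i,k) * cnj (K $$ (j,l))))"
    unfolding sum_distrib_right by (intro sum.cong refl) (simp add: mult_ac)
  also have "\<dots> = (\<Sum>k<n. \<Sum>l<n. X $$ (k,l) * (K $$ (i,k) * cnj (K $$ (j,l))))"
    by (rule sum.swap)
  finally show ?thesis .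
qed

lemma kraus_index:
  assumes "\<forall>K\<in>set L. K \<in> carrier_mat n n" and X: "X \<in> carrier_mat n n" and ij: "i < n" "j < n"
  shows "kraus_map n L X $$ (i,j) = (\<Sum>k<n. \<Sum>l<n. X $$ (k,l) * GL L i k j l)"
  using assms(1)
proof (induction L)
  case Nil
  then show ?case using ij by (simp add: kraus_map_def sum_mats_def)
next
  case (Cons K L)
  have "kraus_map n (K # L) X $$ (i,j) = (K * X * mat_adjoint K) $$ (i,j) + kraus_map n L X $$ (i,j)"
    using ij by (simp add: kraus_map_def sum_mats_index)
  also have "\<dots> = (\<Sum>k<n. \<Sum>l<n. X $$ (k,l) * (K $$ (i,k) * cnj (K $$ (j,l)))) + (\<Sum>k<n. \<Sum>l<n. X $$ (k,l) * GL L i k j l)"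
    using Cons kraus_term_index[OF _ X ij] by simp
  also have "\<dots> = (\<Sum>k<n. \<Sum>l<n. X $$ (k,l) * GL (K # L) i k j l)"
    by (simp add: distrib_left sum.distrib)
  finally show ?case .
qed

lemma kraus_dim[simp]: "dim_row (kraus_map n L X) = n" "dim_col (kraus_map n L X) = n"
  by (simp_all add: kraus_map_def)

lemma mat_unit_carrier[simp]: "mat_unit n r s \<in> carrier_mat n n"
  by (simp add: mat_unit_def)

lemma mat_unit_index[simp]: "k < n \<Longrightarrow> l < n \<Longrightarrow> mat_unit n r s $$ (k,l) = (if k = r \<and> l = s then 1 else 0)"
  by (simp add: mat_unit_def)

lemma ite_mult: "(if P then 1 else 0) * (x::complex) = (if P then x else 0)" by simp

lemma kraus_unit:
  assumes "\<forall>K\<in>set L. K \<in> carrier_mat n n" "i < n" "j < n" "r < n" "s < n"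
  shows "kraus_map n L (mat_unit n r s) $$ (i,j) = GL L i r j s"
proof -
  have "kraus_map n L (mat_unit n r s) $$ (i,j) = (\<Sum>k<n. \<Sum>l<n. (if k = r \<and> l = s then 1 else 0) * GL L i k j l)"
    using kraus_index[OF assms(1) mat_unit_carrier assms(2,3)] by simp
  also have "\<dots> = (\<Sum>k<n. if k = r then GL L i k j s else 0)"
  proof (intro sum.cong refl)
    fix k assume "k \<in> {..<n}"
    show "(\<Sum>l<n. (if k = r \<and> l = s then 1 else 0) * GL L i k j l) = (if k = r then GL L i k j s else 0)"
      using assms(5) by (cases "k = r") (simp_all add: ite_mult)
  qed
  also have "\<dots> = GL L i r j s" using assms(4) by simp
  finally show ?thesis .
qed

lemma marg1_index:
  assumes "\<forall>K\<in>set L. K \<in> carrier_mat n n" "c < n" "c' < n"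
  shows "sum_mats n n (map (\<lambda>K. mat_adjoint K * K) L) $$ (c,c') = (\<Sum>r<n. GL L r c' r c)"
  using assms(1)
proof (induction L)
  case Nil then show ?case using assms by (simp add: sum_mats_index)
next
  case (Cons K L)
  have KC: "K \<in> carrier_mat n n" using Cons.prems by simp
  have "(mat_adjoint K * K) $$ (c,c') = (\<Sum>r\<in>{0..<n}. cnj (K $$ (r,c)) * K $$ (r,c'))"
    using KC assms by (simp add: scalar_prod_def)
  then have "(mat_adjoint K * K) $$ (c,c') = (\<Sum>r<n. K $$ (r,c') * cnj (K $$ (r,c)))"
    by (simp add: atLeast0LessThan mult.commute)
  then show ?case using Cons assms by (simp add: sum_mats_index sum.distrib)
qed

lemma marg2_index:
  assumes "\<forall>K\<in>set L. K \<in> carrier_mat n n" "r < n" "r' < n"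
  shows "sum_mats n n (map (\<lambda>K. K * mat_adjoint K) L) $$ (r,r') = (\<Sum>k<n. GL L r k r' k)"
  using assms(1)
proof (induction L)
  case Nil then show ?case using assms by (simp add: sum_mats_index)
next
  case (Cons K L)
  have KC: "K \<in> carrier_mat n n" using Cons.prems by simp
  have "(K * mat_adjoint K) $$ (r,r') = (\<Sum>k\<in>{0..<n}. K $$ (r,k) * cnj (K $$ (r',k)))"
    using KC assms by (simp add: scalar_prod_def)
  then have "(K * mat_adjoint K) $$ (r,r') = (\<Sum>k<n. K $$ (r,k) * cnj (K $$ (r',k)))"
    by (simp add: atLeast0LessThan)
  then show ?case using Cons assms by (simp add: sum_mats_index sum.distrib)
qed

lemma GL_diag: "GL L r c r c = of_real (\<Sum>A\<leftarrow>L. (cmod (A $$ (r,c)))^2)"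
  by (induction L) (simp_all del: of_real_power add: complex_norm_square)

lemma GL_pair:
  fixes x y :: real
  shows "of_real (x^2) * GL L r c r c - of_real (x*y) * (GL L r c r' c' + GL L r' c' r c) + of_real (y^2) * GL L r' c' r' c'
     = of_real (\<Sum>A\<leftarrow>L. (cmod (of_real x * A $$ (r,c) - of_real y * A $$ (r',c')))^2)"
proof (induction L)
  case Nil then show ?case by simp
next
  case (Cons A L)
  define a where "a = A $$ (r,c)"
  define b where "b = A $$ (r',c')"
  have sq: "complex_of_real ((cmod (of_real x * a - of_real y * b))^2)
     = of_real (x^2) * (a * cnj a) - of_real (x*y) * (a * cnj b + b * cnj a) + of_real (y^2) * (b * cnj b)"
    unfolding complex_norm_square by (simp add: algebra_simps power2_eq_square)
  have "of_real (x^2) * GL (A#L) r c r c - of_real (x*y) * (GL (A#L) r c r' c' + GL (A#L) r' c' r c) + of_real (y^2) * GL (A#L) r' c' r' c'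
     = (of_real (x^2) * (a * cnj a) - of_real (x*y) * (a * cnj b + b * cnj a) + of_real (y^2) * (b * cnj b))
       + (of_real (x^2) * GL L r c r c - of_real (x*y) * (GL L r c r' c' + GL L r' c' r c) + of_real (y^2) * GL L r' c' r' c')"
    by (simp add: a_def b_def algebra_simps)
  also have "\<dots> = complex_of_real ((cmod (of_real x * a - of_real y * b))^2) + of_real (\<Sum>A\<leftarrow>L. (cmod (of_real x * A $$ (r,c) - of_real y * A $$ (r',c')))^2)"
    using sq Cons by simp
  finally show ?case by (simp add: a_def b_def del: of_real_power)
qed



definition clT :: "nat list list" where
 "clT = [[8, 8, 1, 3, 4, 8], [5, 8, 6, 8, 8, 2], [8, 8, 8, 5, 8, 4], [1, 2, 8, 0, 8, 8], [8, 3, 8, 8, 6, 7], [7, 8, 8, 8, 0, 8]]"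
definition wT :: "real list list" where
 "wT = [[0, 0, 1/3, 1/2, 1/6, 0], [1/6, 0, 2/3, 0, 0, 1/6], [0, 0, 0, 5/6, 0, 1/6], [1/2, 5/6, 0, 2/3, 0, 0], [0, 1/6, 0, 0, 1/6, 5/3], [1/3, 0, 0, 0, 5/3, 0]]"
definition cl :: "nat \<Rightarrow> nat \<Rightarrow> nat" where "cl r c = clT ! r ! c"
definition sp :: "nat \<Rightarrow> nat \<Rightarrow> bool" where "sp r c = (cl r c < 8)"
definition wt :: "nat \<Rightarrow> nat \<Rightarrow> real" where "wt r c = wT ! r ! c"
definition kap :: "nat \<Rightarrow> nat \<Rightarrow> real" where "kap r c = sqrt (wt r c) / 3"
definition KK :: "nat \<Rightarrow> complex mat" where
  "KK a = mat 6 6 (\<lambda>(r,c). if cl r c = a then complex_of_real (kap r c) else 0)"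
definition Ks :: "complex mat list" where "Ks = map KK [0..<8]"

lemma lt6: "(r::nat) < 6 \<longleftrightarrow> r = 0 \<or> r = 1 \<or> r = 2 \<or> r = 3 \<or> r = 4 \<or> r = 5" by presburger
lemma all6: "(\<forall>r<(6::nat). P r) = (P 0 \<and> P 1 \<and> P 2 \<and> P 3 \<and> P 4 \<and> P 5)"
proof
  assume "\<forall>r<6. P r" then show "P 0 \<and> P 1 \<and> P 2 \<and> P 3 \<and> P 4 \<and> P 5" by simp
next
  assume H: "P 0 \<and> P 1 \<and> P 2 \<and> P 3 \<and> P 4 \<and> P 5"
  show "\<forall>r<6. P r"
  proof (intro allI impI)
    fix r :: nat assume "r < 6"
    then have "r = 0 \<or> r = 1 \<or> r = 2 \<or> r = 3 \<or> r = 4 \<or> r = 5" by presburger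
    then show "P r" using H by (elim disjE) simp_all
  qed
qed
lemma sum6: "(\<Sum>r<(6::nat). f r) = f 0 + f 1 + f 2 + f 3 + f 4 + f 5"
  by (simp add: numeral_eq_Suc)

lemma wt_nonneg: "\<forall>r<6. \<forall>c<6. wt r c \<ge> 0"
  unfolding all6 by (simp add: wt_def wT_def)
lemma wt_pos: "\<forall>r<6. \<forall>c<6. sp r c \<longrightarrow> wt r c > 0"
  unfolding all6 by (simp add: wt_def wT_def sp_def cl_def clT_def)
lemma wt_zero: "\<forall>r<6. \<forall>c<6. \<not> sp r c \<longrightarrow> wt r c = 0"
  unfolding all6 by (simp add: wt_def wT_def sp_def cl_def clT_def)
lemma rowsum: "\<forall>r<6. (\<Sum>c<6. wt r c) = (if r < 3 then 1 else 2)"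
  unfolding all6 sum6 by (simp add: wt_def wT_def)
lemma colsum: "\<forall>c<6. (\<Sum>r<6. wt r c) = (if c < 3 then 1 else 2)"
  unfolding all6 sum6 by (simp add: wt_def wT_def)

lemma upt_all: "list_all P [0..<n] = (\<forall>x<n. P x)" by (auto simp: list_all_iff)

lemma proper_row_chk: "list_all (\<lambda>r. list_all (\<lambda>c. list_all (\<lambda>c'. c=c' \<or> \<not> sp r c \<or> \<not> sp r c' \<or> cl r c \<noteq> cl r c') [0..<6]) [0..<6]) [0..<6]"
  by code_simp
lemma proper_col_chk: "list_all (\<lambda>c. list_all (\<lambda>r. list_all (\<lambda>r'. r=r' \<or> \<not> sp r c \<or> \<not> sp r' c \<or> cl r c \<noteq> cl r' c) [0..<6]) [0..<6]) [0..<6]"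
  by code_simp

lemma proper_row: "r < 6 \<Longrightarrow> c < 6 \<Longrightarrow> c' < 6 \<Longrightarrow> c \<noteq> c' \<Longrightarrow> sp r c \<Longrightarrow> sp r c' \<Longrightarrow> cl r c \<noteq> cl r c'"
  using proper_row_chk unfolding upt_all by blast
lemma proper_col: "r < 6 \<Longrightarrow> r' < 6 \<Longrightarrow> c < 6 \<Longrightarrow> r \<noteq> r' \<Longrightarrow> sp r c \<Longrightarrow> sp r' c \<Longrightarrow> cl r c \<noteq> cl r' c"
  using proper_col_chk unfolding upt_all by blast

lemma kap_sq: "r < 6 \<Longrightarrow> c < 6 \<Longrightarrow> kap r c * kap r c = wt r c / 9"
  using wt_nonneg by (simp add: kap_def)
lemma kap_pos: "r < 6 \<Longrightarrow> c < 6 \<Longrightarrow> sp r c \<Longrightarrow> kap r c > 0"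
  using wt_pos by (simp add: kap_def)
lemma kap_zero: "r < 6 \<Longrightarrow> c < 6 \<Longrightarrow> \<not> sp r c \<Longrightarrow> kap r c = 0"
  using wt_zero by (simp add: kap_def)

lemma Ks_carrier: "\<forall>K\<in>set Ks. K \<in> carrier_mat 6 6"
  by (auto simp: Ks_def KK_def)

lemma GL_Ks: assumes "r < 6" "c < 6" "r' < 6" "c' < 6"
  shows "GL Ks r c r' c' = (if sp r c \<and> cl r c = cl r' c' then complex_of_real (kap r c * kap r' c') else 0)"
proof -
  have "GL Ks r c r' c' = (\<Sum>a\<in>{0..<8}. (if cl r c = a then complex_of_real (kap r c) else 0) * cnj (if cl r' c' = a then complex_of_real (kap r' c') else 0))"
    using assms by (simp add: GL_def Ks_def KK_def interv_sum_list_conv_sum_set_nat)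
  also have "\<dots> = (\<Sum>a\<in>{0..<8}. if a = cl r c then (if cl r' c' = cl r c then complex_of_real (kap r c * kap r' c') else 0) else 0)"
    by (intro sum.cong refl) auto
  also have "\<dots> = (if sp r c \<and> cl r c = cl r' c' then complex_of_real (kap r c * kap r' c') else 0)"
    by (auto simp: sp_def)
  finally show ?thesis .
qed

lemma D_index: assumes "i < 6" "j < 6"
  shows "D_mat $$ (i,j) = (if i = j then (if i < 3 then 1/9 else 2/9) else 0)"
  using assms unfolding lt6
  by (auto simp: D_mat_def kron_mat_def sigma_mat_def)

lemma D_dim[simp]: "dim_row D_mat = 6" "dim_col D_mat = 6"
  by (simp_all add: D_mat_def kron_mat_def sigma_mat_def)



lemma GL_Ks_diag: "r < 6 \<Longrightarrow> c < 6 \<Longrightarrow> GL Ks r c r c = complex_of_real (wt r c / 9)"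
proof (cases "sp r c")
  case True
  assume rc: "r < 6" "c < 6"
  have "GL Ks r c r c = complex_of_real (kap r c * kap r c)" using GL_Ks[OF rc rc] True by simp
  then show ?thesis using kap_sq[OF rc] by simp
next
  case False
  assume rc: "r < 6" "c < 6"
  then show ?thesis using GL_Ks[OF rc rc] False wt_zero by simp
qed

lemma marg_Ks1: "sum_mats 6 6 (map (\<lambda>K. mat_adjoint K * K) Ks) = D_mat"
proof (rule eq_matI)
  fix i j assume "i < dim_row D_mat" "j < dim_col D_mat"
  hence ij: "i < 6" "j < 6" by simp_all
  have "sum_mats 6 6 (map (\<lambda>K. mat_adjoint K * K) Ks) $$ (i,j) = (\<Sum>r<6. GL Ks r j r i)"
    by (rule marg1_index[OF Ks_carrier ij])
  also have "\<dots> = D_mat $$ (i,j)"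
  proof (cases "i = j")
    case True
    have "(\<Sum>r<6. GL Ks r j r i) = (\<Sum>r<6. complex_of_real (wt r i / 9))"
      using True ij by (intro sum.cong refl) (simp add: GL_Ks_diag)
    also have "\<dots> = complex_of_real ((\<Sum>r<6. wt r i) / 9)"
      by (simp add: sum_divide_distrib)
    also have "\<dots> = D_mat $$ (i,j)" using colsum ij True by (simp add: D_index)
    finally show ?thesis .
  next
    case False
    have "(\<Sum>r<6. GL Ks r j r i) = (\<Sum>r<(6::nat). 0)"
    proof (intro sum.cong refl)
      fix r assume "r \<in> {..<(6::nat)}"
      then have r: "r < 6" by simp
      show "GL Ks r j r i = 0"
        using GL_Ks[OF r ij(2) r ij(1)] proper_row[OF r ij(2) ij(1)] False by (auto simp: sp_def)
    qed
    then show ?thesis using False ij by (simp add: D_index)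
  qed
  finally show "sum_mats 6 6 (map (\<lambda>K. mat_adjoint K * K) Ks) $$ (i,j) = D_mat $$ (i,j)" .
qed auto

lemma marg_Ks2: "sum_mats 6 6 (map (\<lambda>K. K * mat_adjoint K) Ks) = D_mat"
proof (rule eq_matI)
  fix i j assume "i < dim_row D_mat" "j < dim_col D_mat"
  hence ij: "i < 6" "j < 6" by simp_all
  have "sum_mats 6 6 (map (\<lambda>K. K * mat_adjoint K) Ks) $$ (i,j) = (\<Sum>k<6. GL Ks i k j k)"
    by (rule marg2_index[OF Ks_carrier ij])
  also have "\<dots> = D_mat $$ (i,j)"
  proof (cases "i = j")
    case True
    have "(\<Sum>k<6. GL Ks i k j k) = (\<Sum>k<6. complex_of_real (wt i k / 9))"
      using True ij by (intro sum.cong refl) (simp add: GL_Ks_diag)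
    also have "\<dots> = complex_of_real ((\<Sum>k<6. wt i k) / 9)"
      by (simp add: sum_divide_distrib)
    also have "\<dots> = D_mat $$ (i,j)" using rowsum ij True by (simp add: D_index)
    finally show ?thesis .
  next
    case False
    have "(\<Sum>k<6. GL Ks i k j k) = (\<Sum>k<(6::nat). 0)"
    proof (intro sum.cong refl)
      fix k assume "k \<in> {..<(6::nat)}"
      then have k: "k < 6" by simp
      show "GL Ks i k j k = 0"
        using GL_Ks[OF ij(1) k ij(2) k] proper_col[OF ij(1) ij(2) k] False by (auto simp: sp_def)
    qed
    then show ?thesis using False ij by (simp add: D_index)
  qed
  finally show "sum_mats 6 6 (map (\<lambda>K. K * mat_adjoint K) Ks) $$ (i,j) = D_mat $$ (i,j)" .
qed auto

lemma Phi0_in: "(\<lambda>X. kraus_map 6 Ks X) \<in> CP_set 6 6 D_mat D_mat"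
  unfolding CP_set_def using Ks_carrier marg_Ks1 marg_Ks2 by blast



definition refr :: "nat \<Rightarrow> nat" where "refr i = [3, 0, 1, 0, 0, 1, 1, 4] ! i"
definition refc :: "nat \<Rightarrow> nat" where "refc i = [3, 2, 5, 3, 4, 0, 2, 5] ! i"

lemma ref_chk: "list_all (\<lambda>i. refr i < 6 \<and> refc i < 6 \<and> cl (refr i) (refc i) = i) [0..<8]"
  by code_simp

lemma ref_ok: "i < 8 \<Longrightarrow> refr i < 6 \<and> refc i < 6 \<and> cl (refr i) (refc i) = i"
  using ref_chk unfolding upt_all by blast

lemma iso_row_chk: "list_all (\<lambda>r. list_all (\<lambda>c. list_all (\<lambda>c'. c=c' \<or> \<not> sp r c \<or> \<not> sp r c' \<or> list_all (\<lambda>r2. r2 = r \<or> \<not> (sp r2 c' \<and> sp r2 c)) [0..<6]) [0..<6]) [0..<6]) [0..<6]"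
  by code_simp
lemma iso_col_chk: "list_all (\<lambda>c. list_all (\<lambda>r. list_all (\<lambda>r'. r=r' \<or> \<not> sp r c \<or> \<not> sp r' c \<or> list_all (\<lambda>k. k = c \<or> \<not> (sp r k \<and> sp r' k)) [0..<6]) [0..<6]) [0..<6]) [0..<6]"
  by code_simp

lemma iso_row: "r0 < 6 \<Longrightarrow> c < 6 \<Longrightarrow> c' < 6 \<Longrightarrow> c \<noteq> c' \<Longrightarrow> sp r0 c \<Longrightarrow> sp r0 c' \<Longrightarrow> r < 6 \<Longrightarrow> r \<noteq> r0 \<Longrightarrow> \<not> (sp r c' \<and> sp r c)"
  using iso_row_chk unfolding upt_all by blast
lemma iso_col: "c0 < 6 \<Longrightarrow> r < 6 \<Longrightarrow> r' < 6 \<Longrightarrow> r \<noteq> r' \<Longrightarrow> sp r c0 \<Longrightarrow> sp r' c0 \<Longrightarrow> k < 6 \<Longrightarrow> k \<noteq> c0 \<Longrightarrow> \<not> (sp r k \<and> sp r' k)"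
  using iso_col_chk unfolding upt_all by blast

lemma lt8: "(i::nat) < 8 \<Longrightarrow> i = 0 \<or> i = 1 \<or> i = 2 \<or> i = 3 \<or> i = 4 \<or> i = 5 \<or> i = 6 \<or> i = 7"
  by presburger

lemma all8: "(\<forall>i<(8::nat). P i) = (P 0 \<and> P 1 \<and> P 2 \<and> P 3 \<and> P 4 \<and> P 5 \<and> P 6 \<and> P 7)"
proof
  assume "\<forall>i<8. P i" then show "P 0 \<and> P 1 \<and> P 2 \<and> P 3 \<and> P 4 \<and> P 5 \<and> P 6 \<and> P 7" by simp
next
  assume H: "P 0 \<and> P 1 \<and> P 2 \<and> P 3 \<and> P 4 \<and> P 5 \<and> P 6 \<and> P 7"
  show "\<forall>i<8. P i"
  proof (intro allI impI)
    fix i :: nat assume "i < 8"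
    then have "i = 0 \<or> i = 1 \<or> i = 2 \<or> i = 3 \<or> i = 4 \<or> i = 5 \<or> i = 6 \<or> i = 7" by presburger
    then show "P i" using H by (elim disjE) simp_all
  qed
qed

lemma diag_solve:
  fixes h :: "nat \<Rightarrow> real" and s :: real
  assumes c: "\<forall>c<6. (\<Sum>r<6. if sp r c then wt r c / 9 * h (cl r c) else 0) = (if c < 3 then 1/9 else 2/9) * s"
    and r: "\<forall>r<6. (\<Sum>k<6. if sp r k then wt r k / 9 * h (cl r k) else 0) = (if r < 3 then 1/9 else 2/9) * s"
  shows "\<forall>i<8. h i = s"
  using c r unfolding all6 all8 sum6
  by (simp add: sp_def cl_def clT_def wt_def wT_def)

lemma conv_zero:
  fixes a b t :: real
  assumes "0 < t" "t < 1" "(0::complex) = of_real t * of_real a + of_real (1-t) * of_real b" "a \<ge> 0" "b \<ge> 0"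
  shows "a = 0"
proof -
  have "0 = t * a + (1-t) * b"
    using assms(3) by (metis of_real_add of_real_eq_0_iff of_real_mult)
  moreover have "t * a \<ge> 0" "(1-t) * b \<ge> 0" using assms by simp_all
  ultimately have "t * a = 0" by linarith
  then show ?thesis using assms(1) by simp
qed

lemma list_zero:
  fixes f :: "'a \<Rightarrow> real"
  assumes "(\<Sum>A\<leftarrow>L. f A) = 0" "\<And>A. f A \<ge> 0" "A \<in> set L"
  shows "f A = 0"
  using assms sum_list_nonneg_eq_0_iff[of "map f L"] by auto


lemma sq_list_nonneg: "0 \<le> (\<Sum>A\<leftarrow>L. (f A)^2 :: real)"
  by (induction L) auto

lemma zero_list: "(\<Sum>A\<leftarrow>L. (0::complex)) = 0"
  by (induction L) auto

lemma if_list_zero: "\<not> P \<Longrightarrow> (\<Sum>A\<leftarrow>L. if P then f A else (0::complex)) = 0"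
  by (induction L) auto

lemma conv_zero2:
  fixes a b t :: real and x :: complex
  assumes "0 < t" "t < 1" "x = of_real t * of_real a + of_real (1-t) * of_real b" "x = 0" "a \<ge> 0" "b \<ge> 0"
  shows "a = 0"
  using conv_zero[of t a b] assms by simp

lemma struct_lem:
  fixes L L' :: "complex mat list" and t :: real
  assumes Lc: "\<forall>K\<in>set L. K \<in> carrier_mat 6 6"
    and m1: "sum_mats 6 6 (map (\<lambda>K. mat_adjoint K * K) L) = D_mat"
    and m2: "sum_mats 6 6 (map (\<lambda>K. K * mat_adjoint K) L) = D_mat"
    and conv: "\<And>r c r' c'. r < 6 \<Longrightarrow> c < 6 \<Longrightarrow> r' < 6 \<Longrightarrow> c' < 6 \<Longrightarrow>
                 GL Ks r c r' c' = of_real t * GL L r c r' c' + of_real (1-t) * GL L' r c r' c'"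
    and t: "0 < t" "t < 1"
  shows "\<And>r c r' c'. r < 6 \<Longrightarrow> c < 6 \<Longrightarrow> r' < 6 \<Longrightarrow> c' < 6 \<Longrightarrow> GL L r c r' c' = GL Ks r c r' c'"
proof -
  have S1: "A $$ (r,c) = 0" if A: "A \<in> set L" and rc: "r < 6" "c < 6" and nsp: "\<not> sp r c" for A r c
  proof -
    define s1 where "s1 = (\<Sum>A\<leftarrow>L. (cmod (A $$ (r,c)))^2)"
    define s2 where "s2 = (\<Sum>A\<leftarrow>L'. (cmod (A $$ (r,c)))^2)"
    have e1: "GL L r c r c = of_real s1" unfolding s1_def by (rule GL_diag)
    have e2: "GL L' r c r c = of_real s2" unfolding s2_def by (rule GL_diag)
    have h0: "GL Ks r c r c = 0" using GL_Ks[OF rc rc] nsp by simp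
    have hc: "GL Ks r c r c = of_real t * of_real s1 + of_real (1-t) * of_real s2"
      using conv[OF rc rc] unfolding e1 e2 .
    have "s1 = 0" by (rule conv_zero2[OF t hc h0]) (simp_all add: s1_def s2_def sq_list_nonneg)
    then have "(cmod (A $$ (r,c)))^2 = 0" unfolding s1_def by (rule list_zero) (auto simp: A)
    then show ?thesis by simp
  qed
  have S2: "of_real (kap r' c') * A $$ (r,c) = of_real (kap r c) * A $$ (r',c')"
    if A: "A \<in> set L" and rc: "r < 6" "c < 6" "r' < 6" "c' < 6" and sp: "sp r c" "sp r' c'"
      and same: "cl r c = cl r' c'" for A r c r' c'
  proof -
    define x where "x = kap r' c'"
    define y where "y = kap r c"
    define P where "P = (\<lambda>L. of_real (x^2) * GL L r c r c - of_real (x*y) * (GL L r c r' c' + GL L r' c' r c) + of_real (y^2) * GL L r' c' r' c')"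
    define s1 where "s1 = (\<Sum>A\<leftarrow>L. (cmod (of_real x * A $$ (r,c) - of_real y * A $$ (r',c')))^2)"
    define s2 where "s2 = (\<Sum>A\<leftarrow>L'. (cmod (of_real x * A $$ (r,c) - of_real y * A $$ (r',c')))^2)"
    have e1: "P L = of_real s1" unfolding P_def s1_def by (rule GL_pair)
    have e2: "P L' = of_real s2" unfolding P_def s2_def by (rule GL_pair)
    have hc: "P Ks = of_real t * P L + of_real (1-t) * P L'"
      unfolding P_def conv[OF rc(1,2) rc(1,2)] conv[OF rc(1,2) rc(3,4)] conv[OF rc(3,4) rc(1,2)] conv[OF rc(3,4) rc(3,4)]
      by (simp add: algebra_simps)
    have "P Ks = of_real (x^2 * (y*y) - x*y*(y*x + x*y) + y^2*(x*x))"
      unfolding P_def using GL_Ks[OF rc(1,2) rc(1,2)] GL_Ks[OF rc(1,2) rc(3,4)] GL_Ks[OF rc(3,4) rc(1,2)] GL_Ks[OF rc(3,4) rc(3,4)] sp same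
      by (simp add: x_def y_def)
    also have "\<dots> = 0" by (simp add: algebra_simps power2_eq_square)
    finally have h0: "P Ks = 0" .
    have hc2: "P Ks = of_real t * of_real s1 + of_real (1-t) * of_real s2"
      unfolding e1[symmetric] e2[symmetric] by (rule hc)
    have "s1 = 0" by (rule conv_zero2[OF t hc2 h0]) (simp_all add: s1_def s2_def sq_list_nonneg)
    then have "(cmod (of_real x * A $$ (r,c) - of_real y * A $$ (r',c')))^2 = 0" unfolding s1_def by (rule list_zero) (auto simp: A)
    then show ?thesis by (simp add: x_def y_def)
  qed
  define \<alpha> where "\<alpha> = (\<lambda>(A::complex mat) i. A $$ (refr i, refc i) / of_real (kap (refr i) (refc i)))"
  have S3: "A $$ (r,c) = (if sp r c then of_real (kap r c) * \<alpha> A (cl r c) else 0)"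
    if A: "A \<in> set L" and rc: "r < 6" "c < 6" for A r c
  proof (cases "sp r c")
    case True
    define i where "i = cl r c"
    have i8: "i < 8" using True by (simp add: i_def sp_def)
    note R = ref_ok[OF i8]
    have spi: "sp (refr i) (refc i)" using R i8 by (simp add: sp_def)
    have kp: "kap (refr i) (refc i) > 0" using kap_pos R spi by simp
    have "of_real (kap (refr i) (refc i)) * A $$ (r,c) = of_real (kap r c) * A $$ (refr i, refc i)"
      by (rule S2[OF A rc R[THEN conjunct1] R[THEN conjunct2, THEN conjunct1] True spi]) (use R i_def in simp)
    then have "A $$ (r,c) = of_real (kap r c) * \<alpha> A i"
      using kp by (simp add: \<alpha>_def field_simps)
    then show ?thesis using True by (simp add: i_def)
  next
    case False
    then show ?thesis using S1[OF A rc] by simp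
  qed
  define g where "g = (\<lambda>i j. (\<Sum>A\<leftarrow>L. \<alpha> A i * cnj (\<alpha> A j)))"
  have S4: "GL L r c r' c' = (if sp r c \<and> sp r' c' then of_real (kap r c * kap r' c') * g (cl r c) (cl r' c') else 0)"
    if rc: "r < 6" "c < 6" "r' < 6" "c' < 6" for r c r' c'
  proof -
    have "GL L r c r' c' = (\<Sum>A\<leftarrow>L. (if sp r c \<and> sp r' c' then of_real (kap r c * kap r' c') * (\<alpha> A (cl r c) * cnj (\<alpha> A (cl r' c'))) else 0))"
      unfolding GL_def
      by (rule arg_cong[where f=sum_list], rule map_cong) (auto simp: S3 rc)
    also have "\<dots> = (if sp r c \<and> sp r' c' then of_real (kap r c * kap r' c') * g (cl r c) (cl r' c') else 0)"
      by (cases "sp r c \<and> sp r' c'") (auto simp add: g_def sum_list_const_mult if_list_zero)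
    finally show ?thesis .
  qed
  have offrow: "g (cl r0 c') (cl r0 c) = 0"
    if rc: "r0 < 6" "c < 6" "c' < 6" "c \<noteq> c'" "sp r0 c" "sp r0 c'" for r0 c c'
  proof -
    have "(\<Sum>r<6. GL L r c' r c) = D_mat $$ (c,c')"
      using marg1_index[OF Lc rc(2,3)] m1 by simp
    also have "\<dots> = 0" using rc by (simp add: D_index)
    finally have sum0: "(\<Sum>r<6. GL L r c' r c) = 0" .
    have "(\<Sum>r<6. GL L r c' r c) = GL L r0 c' r0 c + (\<Sum>r\<in>{..<6} - {r0}. GL L r c' r c)"
      using rc(1) by (simp add: sum.remove)
    also have "(\<Sum>r\<in>{..<6} - {r0}. GL L r c' r c) = 0"
    proof (rule sum.neutral, rule ballI)
      fix r assume "r \<in> {..<6} - {r0}"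
      then have r: "r < 6" "r \<noteq> r0" by auto
      show "GL L r c' r c = 0" using S4[OF r(1) rc(3) r(1) rc(2)] iso_row[OF rc(1-6) r] by auto
    qed
    finally have "GL L r0 c' r0 c = 0" using sum0 by simp
    then have "of_real (kap r0 c' * kap r0 c) * g (cl r0 c') (cl r0 c) = 0"
      using S4[OF rc(1,3,1,2)] rc by simp
    moreover have "kap r0 c' * kap r0 c \<noteq> 0" using kap_pos rc by (metis mult_pos_pos less_irrefl)
    ultimately show ?thesis by simp
  qed
  have offcol: "g (cl r c0) (cl r' c0) = 0"
    if rc: "c0 < 6" "r < 6" "r' < 6" "r \<noteq> r'" "sp r c0" "sp r' c0" for c0 r r'
  proof -
    have "(\<Sum>k<6. GL L r k r' k) = D_mat $$ (r,r')"
      using marg2_index[OF Lc rc(2,3)] m2 by simp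
    also have "\<dots> = 0" using rc by (simp add: D_index)
    finally have sum0: "(\<Sum>k<6. GL L r k r' k) = 0" .
    have "(\<Sum>k<6. GL L r k r' k) = GL L r c0 r' c0 + (\<Sum>k\<in>{..<6} - {c0}. GL L r k r' k)"
      using rc(1) by (simp add: sum.remove)
    also have "(\<Sum>k\<in>{..<6} - {c0}. GL L r k r' k) = 0"
    proof (rule sum.neutral, rule ballI)
      fix k assume "k \<in> {..<6} - {c0}"
      then have k: "k < 6" "k \<noteq> c0" by auto
      show "GL L r k r' k = 0" using S4[OF rc(2) k(1) rc(3) k(1)] iso_col[OF rc(1-6) k] by auto
    qed
    finally have "GL L r c0 r' c0 = 0" using sum0 by simp
    then have "of_real (kap r c0 * kap r' c0) * g (cl r c0) (cl r' c0) = 0"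
      using S4[OF rc(2,1,3,1)] rc by simp
    moreover have "kap r c0 * kap r' c0 \<noteq> 0" using kap_pos rc by (metis mult_pos_pos less_irrefl)
    ultimately show ?thesis by simp
  qed
  have GLd: "GL L r c r c = (if sp r c then of_real (wt r c / 9) * g (cl r c) (cl r c) else 0)"
    if rc: "r < 6" "c < 6" for r c
    unfolding S4[OF rc rc] kap_sq[OF rc] by simp
  have dc: "(\<Sum>r<6. GL L r c r c) = (if c < 3 then 1/9 else 2/9)" if c: "c < 6" for c
    using marg1_index[OF Lc c c] m1 D_index[OF c c] by simp
  have dr: "(\<Sum>k<6. GL L r k r k) = (if r < 3 then 1/9 else 2/9)" if r: "r < 6" for r
    using marg2_index[OF Lc r r] m2 D_index[OF r r] by simp
  have ReGL: "Re (GL L r c r c) = (if sp r c then wt r c / 9 * Re (g (cl r c) (cl r c)) else 0)"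
    if rc: "r < 6" "c < 6" for r c
    using GLd[OF rc] by simp
  have ImGL: "Im (GL L r c r c) = (if sp r c then wt r c / 9 * Im (g (cl r c) (cl r c)) else 0)"
    if rc: "r < 6" "c < 6" for r c
    using GLd[OF rc] by simp
  have reC: "\<forall>c<6. (\<Sum>r<6. if sp r c then wt r c / 9 * Re (g (cl r c) (cl r c)) else 0) = (if c < 3 then 1/9 else 2/9) * 1"
  proof (intro allI impI)
    fix c :: nat assume c: "c < 6"
    have "(\<Sum>r<6. if sp r c then wt r c / 9 * Re (g (cl r c) (cl r c)) else 0) = (\<Sum>r<6. Re (GL L r c r c))"
      using c by (intro sum.cong refl) (simp add: ReGL)
    also have "\<dots> = Re (\<Sum>r<6. GL L r c r c)" by (simp add: Re_sum)
    also have "\<dots> = (if c < 3 then 1/9 else 2/9) * 1" using dc[OF c] by simp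
    finally show "(\<Sum>r<6. if sp r c then wt r c / 9 * Re (g (cl r c) (cl r c)) else 0) = (if c < 3 then 1/9 else 2/9) * 1" .
  qed
  have reR: "\<forall>r<6. (\<Sum>k<6. if sp r k then wt r k / 9 * Re (g (cl r k) (cl r k)) else 0) = (if r < 3 then 1/9 else 2/9) * 1"
  proof (intro allI impI)
    fix r :: nat assume r: "r < 6"
    have "(\<Sum>k<6. if sp r k then wt r k / 9 * Re (g (cl r k) (cl r k)) else 0) = (\<Sum>k<6. Re (GL L r k r k))"
      using r by (intro sum.cong refl) (simp add: ReGL)
    also have "\<dots> = Re (\<Sum>k<6. GL L r k r k)" by (simp add: Re_sum)
    also have "\<dots> = (if r < 3 then 1/9 else 2/9) * 1" using dr[OF r] by simp
    finally show "(\<Sum>k<6. if sp r k then wt r k / 9 * Re (g (cl r k) (cl r k)) else 0) = (if r < 3 then 1/9 else 2/9) * 1" .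
  qed
  have imC: "\<forall>c<6. (\<Sum>r<6. if sp r c then wt r c / 9 * Im (g (cl r c) (cl r c)) else 0) = (if c < 3 then 1/9 else 2/9) * 0"
  proof (intro allI impI)
    fix c :: nat assume c: "c < 6"
    have "(\<Sum>r<6. if sp r c then wt r c / 9 * Im (g (cl r c) (cl r c)) else 0) = (\<Sum>r<6. Im (GL L r c r c))"
      using c by (intro sum.cong refl) (simp add: ImGL)
    also have "\<dots> = Im (\<Sum>r<6. GL L r c r c)" by (simp add: Im_sum)
    also have "\<dots> = (if c < 3 then 1/9 else 2/9) * 0" using dc[OF c] by simp
    finally show "(\<Sum>r<6. if sp r c then wt r c / 9 * Im (g (cl r c) (cl r c)) else 0) = (if c < 3 then 1/9 else 2/9) * 0" .
  qed
  have imR: "\<forall>r<6. (\<Sum>k<6. if sp r k then wt r k / 9 * Im (g (cl r k) (cl r k)) else 0) = (if r < 3 then 1/9 else 2/9) * 0"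
  proof (intro allI impI)
    fix r :: nat assume r: "r < 6"
    have "(\<Sum>k<6. if sp r k then wt r k / 9 * Im (g (cl r k) (cl r k)) else 0) = (\<Sum>k<6. Im (GL L r k r k))"
      using r by (intro sum.cong refl) (simp add: ImGL)
    also have "\<dots> = Im (\<Sum>k<6. GL L r k r k)" by (simp add: Im_sum)
    also have "\<dots> = (if r < 3 then 1/9 else 2/9) * 0" using dr[OF r] by simp
    finally show "(\<Sum>k<6. if sp r k then wt r k / 9 * Im (g (cl r k) (cl r k)) else 0) = (if r < 3 then 1/9 else 2/9) * 0" .
  qed
  have gre: "\<forall>i<8. Re (g i i) = 1" by (rule diag_solve[where h="\<lambda>i. Re (g i i)", OF reC reR])
  have gim: "\<forall>i<8. Im (g i i) = 0" by (rule diag_solve[where h="\<lambda>i. Im (g i i)", OF imC imR])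
  have gdiag: "g i i = 1" if "i < 8" for i
    using gre gim that by (simp add: complex_eq_iff)
  have w0: "g 0 1 = 0" using offrow[of 3 0 3] by (simp add: sp_def cl_def clT_def)
  have w1: "g 0 2 = 0" using offrow[of 3 1 3] by (simp add: sp_def cl_def clT_def)
  have w2: "g 0 3 = 0" using offcol[of 3 3 0] by (simp add: sp_def cl_def clT_def)
  have w3: "g 0 4 = 0" using offcol[of 4 5 0] by (simp add: sp_def cl_def clT_def)
  have w4: "g 0 5 = 0" using offcol[of 3 3 2] by (simp add: sp_def cl_def clT_def)
  have w5: "g 0 6 = 0" using offcol[of 4 5 4] by (simp add: sp_def cl_def clT_def)
  have w6: "g 0 7 = 0" using offrow[of 5 0 4] by (simp add: sp_def cl_def clT_def)
  have w7: "g 1 0 = 0" using offrow[of 3 3 0] by (simp add: sp_def cl_def clT_def)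
  have w8: "g 1 2 = 0" using offrow[of 3 1 0] by (simp add: sp_def cl_def clT_def)
  have w9: "g 1 3 = 0" using offrow[of 0 3 2] by (simp add: sp_def cl_def clT_def)
  have w10: "g 1 4 = 0" using offrow[of 0 4 2] by (simp add: sp_def cl_def clT_def)
  have w11: "g 1 5 = 0" using offcol[of 0 3 1] by (simp add: sp_def cl_def clT_def)
  have w12: "g 1 6 = 0" using offcol[of 2 0 1] by (simp add: sp_def cl_def clT_def)
  have w13: "g 1 7 = 0" using offcol[of 0 3 5] by (simp add: sp_def cl_def clT_def)
  have w14: "g 2 0 = 0" using offrow[of 3 3 1] by (simp add: sp_def cl_def clT_def)
  have w15: "g 2 1 = 0" using offrow[of 3 0 1] by (simp add: sp_def cl_def clT_def)
  have w16: "g 2 3 = 0" using offcol[of 1 3 4] by (simp add: sp_def cl_def clT_def)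
  have w17: "g 2 4 = 0" using offcol[of 5 1 2] by (simp add: sp_def cl_def clT_def)
  have w18: "g 2 5 = 0" using offrow[of 1 0 5] by (simp add: sp_def cl_def clT_def)
  have w19: "g 2 6 = 0" using offrow[of 1 2 5] by (simp add: sp_def cl_def clT_def)
  have w20: "g 2 7 = 0" using offcol[of 5 1 4] by (simp add: sp_def cl_def clT_def)
  have w21: "g 3 0 = 0" using offcol[of 3 0 3] by (simp add: sp_def cl_def clT_def)
  have w22: "g 3 1 = 0" using offrow[of 0 2 3] by (simp add: sp_def cl_def clT_def)
  have w23: "g 3 2 = 0" using offcol[of 1 4 3] by (simp add: sp_def cl_def clT_def)
  have w24: "g 3 4 = 0" using offrow[of 0 4 3] by (simp add: sp_def cl_def clT_def)
  have w25: "g 3 5 = 0" using offcol[of 3 0 2] by (simp add: sp_def cl_def clT_def)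
  have w26: "g 3 6 = 0" using offrow[of 4 4 1] by (simp add: sp_def cl_def clT_def)
  have w27: "g 3 7 = 0" using offrow[of 4 5 1] by (simp add: sp_def cl_def clT_def)
  have w28: "g 4 0 = 0" using offcol[of 4 0 5] by (simp add: sp_def cl_def clT_def)
  have w29: "g 4 1 = 0" using offrow[of 0 2 4] by (simp add: sp_def cl_def clT_def)
  have w30: "g 4 2 = 0" using offcol[of 5 2 1] by (simp add: sp_def cl_def clT_def)
  have w31: "g 4 3 = 0" using offrow[of 0 3 4] by (simp add: sp_def cl_def clT_def)
  have w32: "g 4 5 = 0" using offrow[of 2 3 5] by (simp add: sp_def cl_def clT_def)
  have w33: "g 4 6 = 0" using offcol[of 4 0 4] by (simp add: sp_def cl_def clT_def)
  have w34: "g 4 7 = 0" using offcol[of 5 2 4] by (simp add: sp_def cl_def clT_def)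
  have w35: "g 5 0 = 0" using offcol[of 3 2 3] by (simp add: sp_def cl_def clT_def)
  have w36: "g 5 1 = 0" using offcol[of 0 1 3] by (simp add: sp_def cl_def clT_def)
  have w37: "g 5 2 = 0" using offrow[of 1 5 0] by (simp add: sp_def cl_def clT_def)
  have w38: "g 5 3 = 0" using offcol[of 3 2 0] by (simp add: sp_def cl_def clT_def)
  have w39: "g 5 4 = 0" using offrow[of 2 5 3] by (simp add: sp_def cl_def clT_def)
  have w40: "g 5 6 = 0" using offrow[of 1 2 0] by (simp add: sp_def cl_def clT_def)
  have w41: "g 5 7 = 0" using offcol[of 0 1 5] by (simp add: sp_def cl_def clT_def)
  have w42: "g 6 0 = 0" using offcol[of 4 4 5] by (simp add: sp_def cl_def clT_def)
  have w43: "g 6 1 = 0" using offcol[of 2 1 0] by (simp add: sp_def cl_def clT_def)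
  have w44: "g 6 2 = 0" using offrow[of 1 5 2] by (simp add: sp_def cl_def clT_def)
  have w45: "g 6 3 = 0" using offrow[of 4 1 4] by (simp add: sp_def cl_def clT_def)
  have w46: "g 6 4 = 0" using offcol[of 4 4 0] by (simp add: sp_def cl_def clT_def)
  have w47: "g 6 5 = 0" using offrow[of 1 0 2] by (simp add: sp_def cl_def clT_def)
  have w48: "g 6 7 = 0" using offrow[of 4 5 4] by (simp add: sp_def cl_def clT_def)
  have w49: "g 7 0 = 0" using offrow[of 5 4 0] by (simp add: sp_def cl_def clT_def)
  have w50: "g 7 1 = 0" using offcol[of 0 5 3] by (simp add: sp_def cl_def clT_def)
  have w51: "g 7 2 = 0" using offcol[of 5 4 1] by (simp add: sp_def cl_def clT_def)
  have w52: "g 7 3 = 0" using offrow[of 4 1 5] by (simp add: sp_def cl_def clT_def)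
  have w53: "g 7 4 = 0" using offcol[of 5 4 2] by (simp add: sp_def cl_def clT_def)
  have w54: "g 7 5 = 0" using offcol[of 0 5 1] by (simp add: sp_def cl_def clT_def)
  have w55: "g 7 6 = 0" using offrow[of 4 4 5] by (simp add: sp_def cl_def clT_def)
  note offs = w0 w1 w2 w3 w4 w5 w6 w7 w8 w9 w10 w11 w12 w13 w14 w15 w16 w17 w18 w19 w20 w21 w22 w23 w24 w25 w26 w27 w28 w29 w30 w31 w32 w33 w34 w35 w36 w37 w38 w39 w40 w41 w42 w43 w44 w45 w46 w47 w48 w49 w50 w51 w52 w53 w54 w55
  have gall: "g i j = (if i = j then 1 else 0)" if ij: "i < 8" "j < 8" for i j
  proof (cases "i = j")
    case True then show ?thesis using gdiag ij by simp
  next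
    case False
    have "i = 0 \<or> i = 1 \<or> i = 2 \<or> i = 3 \<or> i = 4 \<or> i = 5 \<or> i = 6 \<or> i = 7" using lt8[OF ij(1)] .
    moreover have "j = 0 \<or> j = 1 \<or> j = 2 \<or> j = 3 \<or> j = 4 \<or> j = 5 \<or> j = 6 \<or> j = 7" using lt8[OF ij(2)] .
    ultimately show ?thesis using False by (elim disjE) (simp_all add: offs offs[unfolded One_nat_def])
  qed
  fix r c r' c' :: nat assume rc: "r < 6" "c < 6" "r' < 6" "c' < 6"
  show "GL L r c r' c' = GL Ks r c r' c'"
    unfolding S4[OF rc] GL_Ks[OF rc] using gall by (auto simp: sp_def)
qed



lemma kraus_eq:
  assumes "\<forall>K\<in>set L1. K \<in> carrier_mat n n" "\<forall>K\<in>set L2. K \<in> carrier_mat n n" "X \<in> carrier_mat n n"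
    and "\<And>r c r' c'. r < n \<Longrightarrow> c < n \<Longrightarrow> r' < n \<Longrightarrow> c' < n \<Longrightarrow> GL L1 r c r' c' = GL L2 r c r' c'"
  shows "kraus_map n L1 X = kraus_map n L2 X"
proof (rule eq_matI)
  fix i j assume "i < dim_row (kraus_map n L2 X)" "j < dim_col (kraus_map n L2 X)"
  then have ij: "i < n" "j < n" by simp_all
  show "kraus_map n L1 X $$ (i,j) = kraus_map n L2 X $$ (i,j)"
    unfolding kraus_index[OF assms(1,3) ij] kraus_index[OF assms(2,3) ij]
    using assms(4) ij by (intro sum.cong refl) auto
qed simp_all

lemma extreme: "extreme_map 6 (CP_set 6 6 D_mat D_mat) (\<lambda>X. kraus_map 6 Ks X)"
  unfolding extreme_map_def
proof (intro conjI notI)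
  show "(\<lambda>X. kraus_map 6 Ks X) \<in> CP_set 6 6 D_mat D_mat" by (rule Phi0_in)
  assume "\<exists>t. \<exists>\<Phi>1\<in>CP_set 6 6 D_mat D_mat. \<exists>\<Phi>2\<in>CP_set 6 6 D_mat D_mat. 0 < t \<and> t < 1 \<and>
          (\<exists>X\<in>carrier_mat 6 6. \<Phi>1 X \<noteq> \<Phi>2 X) \<and>
          (\<forall>X\<in>carrier_mat 6 6. kraus_map 6 Ks X = complex_of_real t \<cdot>\<^sub>m \<Phi>1 X + complex_of_real (1 - t) \<cdot>\<^sub>m \<Phi>2 X)"
  then obtain t \<Phi>1 \<Phi>2 where P1: "\<Phi>1 \<in> CP_set 6 6 D_mat D_mat" and P2: "\<Phi>2 \<in> CP_set 6 6 D_mat D_mat"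
    and t: "0 < t" "t < 1" and X0: "\<exists>X\<in>carrier_mat 6 6. \<Phi>1 X \<noteq> \<Phi>2 X"
    and mix: "\<forall>X\<in>carrier_mat 6 6. kraus_map 6 Ks X = complex_of_real t \<cdot>\<^sub>m \<Phi>1 X + complex_of_real (1 - t) \<cdot>\<^sub>m \<Phi>2 X"
    by blast
  from P1 obtain L1 where L1c: "\<forall>K\<in>set L1. K \<in> carrier_mat 6 6"
    and L1f: "\<forall>X\<in>carrier_mat 6 6. \<Phi>1 X = kraus_map 6 L1 X"
    and L1a: "sum_mats 6 6 (map (\<lambda>K. mat_adjoint K * K) L1) = D_mat"
    and L1b: "sum_mats 6 6 (map (\<lambda>K. K * mat_adjoint K) L1) = D_mat"
    unfolding CP_set_def by blast
  from P2 obtain L2 where L2c: "\<forall>K\<in>set L2. K \<in> carrier_mat 6 6"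
    and L2f: "\<forall>X\<in>carrier_mat 6 6. \<Phi>2 X = kraus_map 6 L2 X"
    and L2a: "sum_mats 6 6 (map (\<lambda>K. mat_adjoint K * K) L2) = D_mat"
    and L2b: "sum_mats 6 6 (map (\<lambda>K. K * mat_adjoint K) L2) = D_mat"
    unfolding CP_set_def by blast
  have conv1: "GL Ks r c r' c' = of_real t * GL L1 r c r' c' + of_real (1-t) * GL L2 r c r' c'"
    if rc: "r < 6" "c < 6" "r' < 6" "c' < 6" for r c r' c'
  proof -
    let ?X = "mat_unit 6 c c'"
    have "kraus_map 6 Ks ?X = complex_of_real t \<cdot>\<^sub>m kraus_map 6 L1 ?X + complex_of_real (1 - t) \<cdot>\<^sub>m kraus_map 6 L2 ?X"
      using mix L1f L2f by simp
    then have "kraus_map 6 Ks ?X $$ (r,r') = (complex_of_real t \<cdot>\<^sub>m kraus_map 6 L1 ?X + complex_of_real (1 - t) \<cdot>\<^sub>m kraus_map 6 L2 ?X) $$ (r,r')"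
      by simp
    then show ?thesis
      using rc kraus_unit[OF Ks_carrier, of r r' c c'] kraus_unit[OF L1c, of r r' c c'] kraus_unit[OF L2c, of r r' c c']
      by simp
  qed
  have conv2: "GL Ks r c r' c' = of_real (1-t) * GL L2 r c r' c' + of_real (1-(1-t)) * GL L1 r c r' c'"
    if rc: "r < 6" "c < 6" "r' < 6" "c' < 6" for r c r' c'
    using conv1[OF rc] by simp
  have t2: "0 < 1 - t" "1 - t < 1" using t by simp_all
  have G1: "GL L1 r c r' c' = GL Ks r c r' c'" if rc: "r < 6" "c < 6" "r' < 6" "c' < 6" for r c r' c'
    by (rule struct_lem[OF L1c L1a L1b conv1 t rc])
  have G2: "GL L2 r c r' c' = GL Ks r c r' c'" if rc: "r < 6" "c < 6" "r' < 6" "c' < 6" for r c r' c'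
    by (rule struct_lem[OF L2c L2a L2b conv2 t2 rc])
  from X0 obtain X where X: "X \<in> carrier_mat 6 6" "\<Phi>1 X \<noteq> \<Phi>2 X" by blast
  have "\<Phi>1 X = kraus_map 6 L1 X" using L1f X by simp
  also have "\<dots> = kraus_map 6 L2 X"
    by (rule kraus_eq[OF L1c L2c X(1)]) (simp add: G1 G2)
  also have "\<dots> = \<Phi>2 X" using L2f X by simp
  finally show False using X(2) by simp
qed



definition vv :: "nat \<Rightarrow> nat \<Rightarrow> real" where
  "vv a I = (if cl (I mod 6) (I div 6) = a then kap (I mod 6) (I div 6) else 0)"

definition RR :: "nat \<Rightarrow> complex mat" where
  "RR a = mat 36 36 (\<lambda>(I,J). complex_of_real (vv a I * vv a J))"

lemma mat_unit_dims[simp]: "dim_row (mat_unit n r s) = n" "dim_col (mat_unit n r s) = n"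
  by (simp_all add: mat_unit_def)

lemma choi_entry:
  assumes IJ: "I < 36" "J < 36"
  shows "choi_mat 6 6 (\<lambda>X. kraus_map 6 Ks X) $$ (I,J) = GL Ks (I mod 6) (I div 6) (J mod 6) (J div 6)"
proof -
  let ?f = "\<lambda>(r, s). kron_mat (mat_unit 6 r s) (kraus_map 6 Ks (mat_unit 6 r s))"
  let ?P = "List.product [0..<6] [0..<6::nat]"
  have d: "I div 6 < 6" "J div 6 < 6" "I mod 6 < 6" "J mod 6 < 6" using IJ by simp_all
  have "choi_mat 6 6 (\<lambda>X. kraus_map 6 Ks X) $$ (I,J) = sum_list (map (\<lambda>x. ?f x $$ (I,J)) ?P)"
    unfolding choi_mat_def using IJ by (simp add: sum_mats_index comp_def)
  also have "\<dots> = sum_list (map (\<lambda>x. if x = (I div 6, J div 6) then GL Ks (I mod 6) (I div 6) (J mod 6) (J div 6) else 0) ?P)"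
  proof (rule arg_cong[where f=sum_list], rule map_cong[OF refl])
    fix x assume x: "x \<in> set ?P"
    obtain r s where rs: "x = (r,s)" by (cases x)
    have rs6: "r < 6" "s < 6" using x rs by auto
    have "?f x $$ (I,J) = mat_unit 6 r s $$ (I div 6, J div 6) * kraus_map 6 Ks (mat_unit 6 r s) $$ (I mod 6, J mod 6)"
      using IJ d by (simp add: rs kron_mat_def del: mat_unit_index)
    also have "\<dots> = (if I div 6 = r \<and> J div 6 = s then 1 else 0) * GL Ks (I mod 6) r (J mod 6) s"
      using d rs6 kraus_unit[OF Ks_carrier d(3,4) rs6] by simp
    also have "\<dots> = (if x = (I div 6, J div 6) then GL Ks (I mod 6) (I div 6) (J mod 6) (J div 6) else 0)"
      using rs by auto
    finally show "?f x $$ (I,J) = (if x = (I div 6, J div 6) then GL Ks (I mod 6) (I div 6) (J mod 6) (J div 6) else 0)" .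
  qed
  also have "\<dots> = (\<Sum>x\<in>set ?P. if x = (I div 6, J div 6) then GL Ks (I mod 6) (I div 6) (J mod 6) (J div 6) else 0)"
    by (rule sum_list_distinct_conv_sum_set) (simp add: distinct_product)
  also have "\<dots> = GL Ks (I mod 6) (I div 6) (J mod 6) (J div 6)"
    using d by simp
  finally show ?thesis .
qed

lemma GL_Ks_sum: assumes "r < 6" "c < 6" "r' < 6" "c' < 6"
  shows "GL Ks r c r' c' = (\<Sum>a<8. complex_of_real ((if cl r c = a then kap r c else 0) * (if cl r' c' = a then kap r' c' else 0)))"
proof -
  have "(\<Sum>a<8. complex_of_real ((if cl r c = a then kap r c else 0) * (if cl r' c' = a then kap r' c' else 0)))
      = (\<Sum>a<8. if a = cl r c then (if cl r' c' = cl r c then complex_of_real (kap r c * kap r' c') else 0) else 0)"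
    by (intro sum.cong refl) auto
  also have "\<dots> = (if sp r c \<and> cl r c = cl r' c' then complex_of_real (kap r c * kap r' c') else 0)"
    by (auto simp: sp_def)
  finally show ?thesis using GL_Ks[OF assms] by simp
qed

lemma choi_sum: "choi_mat 6 6 (\<lambda>X. kraus_map 6 Ks X) = sum_mats 36 36 (map RR [0..<8])"
proof (rule eq_matI)
  fix I J assume "I < dim_row (sum_mats 36 36 (map RR [0..<8]))" "J < dim_col (sum_mats 36 36 (map RR [0..<8]))"
  then have IJ: "I < 36" "J < 36" by simp_all
  have d: "I div 6 < 6" "J div 6 < 6" "I mod 6 < 6" "J mod 6 < 6" using IJ by simp_all
  have "sum_mats 36 36 (map RR [0..<8]) $$ (I,J) = (\<Sum>a\<in>{0..<8}. RR a $$ (I,J))"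
    using IJ by (simp add: sum_mats_index interv_sum_list_conv_sum_set_nat)
  also have "\<dots> = (\<Sum>a<8. complex_of_real (vv a I * vv a J))"
    using IJ by (simp add: RR_def atLeast0LessThan)
  also have "\<dots> = GL Ks (I mod 6) (I div 6) (J mod 6) (J div 6)"
    using GL_Ks_sum[OF d(3,1,4,2)] by (simp add: vv_def)
  finally show "choi_mat 6 6 (\<lambda>X. kraus_map 6 Ks X) $$ (I,J) = sum_mats 36 36 (map RR [0..<8]) $$ (I,J)"
    using choi_entry[OF IJ] by simp
qed (simp_all add: choi_mat_def)

lemma rank_sum_le:
  "(\<forall>A\<in>set xs. A \<in> carrier_mat n n \<and> vec_space.rank n A \<le> 1) \<Longrightarrow> vec_space.rank n (sum_mats n n xs) \<le> length xs"
proof (induction xs)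
  case Nil
  then show ?case using vec_space.rank_0I[of n n] by (simp add: sum_mats_def)
next
  case (Cons x xs)
  have xc: "x \<in> carrier_mat n n" "vec_space.rank n x \<le> 1" using Cons.prems by auto
  have sc: "sum_mats n n xs \<in> carrier_mat n n" by (simp add: carrier_matI)
  have "sum_mats n n (x # xs) = x + sum_mats n n xs" by (simp add: sum_mats_def)
  then have "vec_space.rank n (sum_mats n n (x # xs)) \<le> vec_space.rank n x + vec_space.rank n (sum_mats n n xs)"
    using vec_space.rank_subadditive[OF xc(1) sc] by simp
  then show ?case using Cons xc by simp
qed

lemma RR_rank: "vec_space.rank 36 (RR a) \<le> 1"
  by (rule vec_space.rank_le_1_product_entries[of "RR a" 36 36 "\<lambda>I. complex_of_real (vv a I)" "\<lambda>J. complex_of_real (vv a J)"])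
     (auto simp: RR_def)

lemma rank_le8: "vec_space.rank 36 (choi_mat 6 6 (\<lambda>X. kraus_map 6 Ks X)) \<le> 8"
  unfolding choi_sum using rank_sum_le[of "map RR [0..<8]" 36] RR_rank
  by (auto simp: RR_def)


lemma rank_ge8: "8 \<le> vec_space.rank 36 (choi_mat 6 6 (\<lambda>X. kraus_map 6 Ks X))"
proof -
  interpret V: vec_space "TYPE(complex)" 36 .
  define C where "C = choi_mat 6 6 (\<lambda>X. kraus_map 6 Ks X)"
  have Cc: "C \<in> carrier_mat 36 36" unfolding C_def by (simp add: choi_mat_def carrier_matI)
  define J where "J = (\<lambda>a. refc a * 6 + refr a)"
  define u where "u = (\<lambda>a. col C (J a))"
  define k where "k = (\<lambda>a. kap (refr a) (refc a))"
  have Jmod: "J a mod 6 = refr a" "J a div 6 = refc a" "J a < 36" if "a < 8" for a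
    using ref_ok[OF that] by (auto simp: J_def)
  have kpos: "k a > 0" if "a < 8" for a
    using that ref_ok[OF that] kap_pos[of "refr a" "refc a"] by (simp add: k_def sp_def)
  have uent: "u a $ I = complex_of_real (vv a I * k a)" if a: "a < 8" and I: "I < 36" for a I
  proof -
    have d: "I mod 6 < 6" "I div 6 < 6" by (simp, use I in simp)
    have "u a $ I = C $$ (I, J a)" using Cc I Jmod[OF a] by (simp add: u_def)
    also have "\<dots> = GL Ks (I mod 6) (I div 6) (refr a) (refc a)"
      unfolding C_def using choi_entry[OF I Jmod(3)[OF a]] Jmod[OF a] by simp
    also have "\<dots> = complex_of_real (vv a I * k a)"
      using GL_Ks[OF d] ref_ok[OF a] a by (auto simp: vv_def k_def sp_def)
    finally show ?thesis .
  qed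
  have vvJ: "vv b (J a) = (if a = b then k a else 0)" if "a < 8" for a b
    using Jmod[OF that] ref_ok[OF that] by (cases "a = b") (simp_all add: vv_def k_def)
  have inj: "inj_on u {..<8}"
  proof (rule inj_onI)
    fix a b assume ab: "a \<in> {..<8}" "b \<in> {..<8}" "u a = u b"
    show "a = b"
    proof (rule ccontr)
      assume ne: "a \<noteq> b"
      have "u a $ J a = complex_of_real (k a * k a)" using uent[of a "J a"] ab Jmod vvJ by simp
      moreover have "u b $ J a = 0" using uent[of b "J a"] ab Jmod vvJ ne by simp
      ultimately show False using ab kpos[of a] by simp
    qed
  qed
  have Usub: "u ` {..<8} \<subseteq> set (cols C)"
  proof
    fix w assume "w \<in> u ` {..<8}"
    then obtain a where a: "a < 8" "w = u a" by auto
    have "cols C ! J a = col C (J a)" using Cc Jmod[OF a(1)] by simp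
    moreover have "J a < length (cols C)" using Cc Jmod[OF a(1)] by simp
    ultimately show "w \<in> set (cols C)" unfolding a(2) u_def by (metis nth_mem)
  qed
  have Ucar: "u ` {..<8} \<subseteq> carrier_vec 36"
    using Usub Cc by (auto simp: cols_def)
  have li: "V.lin_indpt (u ` {..<8})"
  proof (rule V.finite_lin_indpt2, goal_cases)
    case 1 show ?case by simp
  next
    case 2 show ?case using Ucar by simp
  next
    case (3 x)
    note lc = 3(2)
    show ?case
    proof
      fix v assume "v \<in> u ` {..<8}"
      then obtain b where b: "b < 8" "v = u b" by auto
      have "0 = V.lincomb x (u ` {..<8}) $ J b" using lc Jmod[OF b(1)] by (simp add: class_ring_simps)
      also have "\<dots> = (\<Sum>w\<in>u ` {..<8}. x w * w $ J b)"
        by (rule V.lincomb_index[OF Jmod(3)[OF b(1)] Ucar])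
      also have "\<dots> = (\<Sum>a<8. x (u a) * u a $ J b)"
        by (simp add: sum.reindex[OF inj])
      also have "\<dots> = (\<Sum>a<8. if a = b then x (u b) * complex_of_real (k b * k b) else 0)"
        using b Jmod[OF b(1)] by (intro sum.cong refl) (auto simp: uent vvJ)
      also have "\<dots> = x (u b) * complex_of_real (k b * k b)" using b by simp
      finally have "x (u b) * complex_of_real (k b * k b) = 0" by simp
      then show "x v = 0" using kpos[OF b(1)] b by simp
    qed
  qed
  have "card (u ` {..<8}) = 8" using inj by (simp add: card_image)
  then show ?thesis using V.rank_ge_card_indpt[OF Cc Usub li] unfolding C_def by simp
qed


theorem mainTheorem8:
  shows "\<exists>\<Phi>. extreme_map 6 (CP_set 6 6 D_mat D_mat) \<Phi> \<and> choi_rank 6 6 \<Phi> = 8"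
proof (intro exI conjI)
  show "extreme_map 6 (CP_set 6 6 D_mat D_mat) (\<lambda>X. kraus_map 6 Ks X)" by (rule extreme)
  show "choi_rank 6 6 (\<lambda>X. kraus_map 6 Ks X) = 8"
    unfolding choi_rank_def using rank_le8 rank_ge8 by simp
qed

end
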